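(* Let $\mu \in \mathbb{R}$, $\sigma_u^2 > 0$ and $V > 0$ be fixed, and let $F(\cdot, V)$ be the function of $b \in \mathbb{R}$ defined by \[ F(b,V) = \begin{cases} \displaystyle\int_{\mu}^\infty \Big[1 - \Phi \Big( \frac{- b(u - \mu)}{\sqrt{V - b^2 \sigma_u^2}}\Big) \Big] p(u)\, du, & - \sqrt{V/\sigma_u^2} < b < \sqrt{V/\sigma_u^2}, \\[2mm] \int_{\mu}^\infty p(u)\, du = \tfrac{1}{2}, & b \geq \sqrt{V/\sigma_u^2}, \\[1mm] 0, & b \leq - \sqrt{V/\sigma_u^2}. \end{cases} \] Then $b \mapsto F(b,V)$ is strictly monotonically increasing on the open interval $\left(- \sqrt{V/\sigma_u^2},\ \sqrt{V/\sigma_u^2}\right)$.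
   Context: $\Phi(x) = \int_{-\infty}^x \frac{1}{\sqrt{2\pi}} e^{-s^2/2}\, ds$ is the standard normal cumulative distribution function, and $p(u) = \frac{1}{\sqrt{2\pi\sigma_u^2}} \exp\!\left(-\frac{(u-\mu)^2}{2\sigma_u^2}\right)$ is the density of a $\mathcal{N}(\mu,\sigma_u^2)$ random variable. *)

theory Defs
  imports "HOL-Probability.Probability"
begin

definition Phi :: "real \<Rightarrow> real" where
  "Phi x = (LINT s:{..x}|lborel. exp (- s\<^sup>2 / 2) / sqrt (2 * pi))"

definition pdens :: "real \<Rightarrow> real \<Rightarrow> real \<Rightarrow> real" where
  "pdens \<mu> \<sigma>2 u = exp (- (u - \<mu>)\<^sup>2 / (2 * \<sigma>2)) / sqrt (2 * pi * \<sigma>2)"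

definition F :: "real \<Rightarrow> real \<Rightarrow> real \<Rightarrow> real \<Rightarrow> real" where
  "F \<mu> \<sigma>2 V b =
     (if - sqrt (V / \<sigma>2) < b \<and> b < sqrt (V / \<sigma>2) then
        (LINT u:{\<mu>..}|lborel. (1 - Phi (- b * (u - \<mu>) / sqrt (V - b\<^sup>2 * \<sigma>2))) * pdens \<mu> \<sigma>2 u)
      else if b \<ge> sqrt (V / \<sigma>2) then (LINT u:{\<mu>..}|lborel. pdens \<mu> \<sigma>2 u)
      else 0)"

end

theory Submission
  imports Defs
begin

lemma int_strict:
  fixes f g :: "real \<Rightarrow> real"
  assumes fi: "integrable lborel f" and gi: "integrable lborel g"
    and le: "\<And>x. f x \<le> g x" and ab: "a < b"
    and lt: "\<And>x. a < x \<Longrightarrow> x < b \<Longrightarrow> f x < g x"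
  shows "integral\<^sup>L lborel f < integral\<^sup>L lborel g"
proof -
  have hi: "integrable lborel (\<lambda>x. g x - f x)" using fi gi by auto
  have eq: "integral\<^sup>L lborel (\<lambda>x. g x - f x) = integral\<^sup>L lborel g - integral\<^sup>L lborel f"
    using fi gi by (simp add: Bochner_Integration.integral_diff)
  have nn: "0 \<le> integral\<^sup>L lborel (\<lambda>x. g x - f x)"
    using le by (simp add: integral_nonneg)
  have "integral\<^sup>L lborel (\<lambda>x. g x - f x) \<noteq> 0"
  proof
    assume "integral\<^sup>L lborel (\<lambda>x. g x - f x) = 0"
    then have "AE x in lborel. g x - f x = 0"
      using integral_nonneg_eq_0_iff_AE[OF hi] le by simp
    then have "AE x in lborel. x \<notin> {a<..<b}"
      by eventually_elim (use lt in force)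
    then have "emeasure lborel {a<..<b} = 0"
      using AE_iff_measurable[of "{a<..<b}" lborel "\<lambda>x. x \<notin> {a<..<b}"]
      by (simp add: set_eq_iff)
    then show False using ab by simp
  qed
  then show ?thesis using nn eq by linarith
qed

lemma dens_eq: "exp (- s\<^sup>2 / 2) / sqrt (2 * pi) = std_normal_density s"
  by (simp add: std_normal_density_def)

lemma Phi_alt: "Phi x = integral\<^sup>L lborel (\<lambda>s. indicator {..x} s * std_normal_density s)"
  unfolding Phi_def set_lebesgue_integral_def dens_eq by simp

lemma Phi_int: "integrable lborel (\<lambda>s. indicator {..x} s * std_normal_density s)"
  using integrable_mult_indicator[of "{..x}" lborel std_normal_density] by simp

lemma Phi_strict: "x < y \<Longrightarrow> Phi x < Phi y"
  unfolding Phi_alt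
  apply (rule int_strict[OF Phi_int Phi_int, of _ _ x y])
    apply (auto simp: indicator_def normal_density_pos)
  done

lemma Phi_mono: "mono Phi"
  by (metis Phi_strict less_eq_real_def monoI)

lemma Phi_meas[measurable]: "Phi \<in> borel_measurable borel"
  using Phi_mono borel_measurable_mono by blast

lemma Phi_nonneg: "0 \<le> Phi x"
  unfolding Phi_alt by (auto intro!: integral_nonneg_AE simp: indicator_def)

lemma Phi_le1: "Phi x \<le> 1"
proof -
  have "Phi x \<le> integral\<^sup>L lborel std_normal_density"
    unfolding Phi_alt by (rule integral_mono[OF Phi_int]) (auto simp: indicator_def)
  then show ?thesis by simp
qed

lemma h_mono:
  fixes V s b1 b2 :: real
  assumes "b1 < b2" "b1\<^sup>2 * s < V" "b2\<^sup>2 * s < V" "s > 0"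
  shows "b1 / sqrt (V - b1\<^sup>2 * s) < b2 / sqrt (V - b2\<^sup>2 * s)"
proof -
  have s1: "sqrt (V - b1\<^sup>2 * s) > 0" and s2: "sqrt (V - b2\<^sup>2 * s) > 0" using assms by auto
  consider "b1 < 0" "0 \<le> b2" | "0 \<le> b1" | "b2 < 0" using assms by linarith
  then show ?thesis
  proof cases
    case 1
    have "b1 / sqrt (V - b1\<^sup>2 * s) < 0" using 1 s1 by (simp add: divide_neg_pos)
    moreover have "0 \<le> b2 / sqrt (V - b2\<^sup>2 * s)" using 1 s2 by simp
    ultimately show ?thesis by linarith
  next
    case 2
    then have "b1\<^sup>2 < b2\<^sup>2" using assms by (simp add: power_strict_mono)
    then have "sqrt (V - b2\<^sup>2 * s) < sqrt (V - b1\<^sup>2 * s)" using assms by simp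
    then have "b1 / sqrt (V - b1\<^sup>2 * s) \<le> b2 / sqrt (V - b1\<^sup>2 * s)" 
      and "b2 / sqrt (V - b1\<^sup>2 * s) < b2 / sqrt (V - b2\<^sup>2 * s)"
      using assms 2 s1 s2 by (auto intro!: divide_right_mono divide_strict_left_mono)
    then show ?thesis by linarith
  next
    case 3
    then have "b2\<^sup>2 < b1\<^sup>2" using assms power_strict_mono[of "-b2" "-b1" 2] by simp
    then have "sqrt (V - b1\<^sup>2 * s) < sqrt (V - b2\<^sup>2 * s)" using assms by simp
    then have "(- b2) / sqrt (V - b2\<^sup>2 * s) \<le> (- b2) / sqrt (V - b1\<^sup>2 * s)" 
      using 3 s1 s2 by (intro divide_left_mono) auto
    moreover have "(- b2) / sqrt (V - b1\<^sup>2 * s) < (- b1) / sqrt (V - b1\<^sup>2 * s)"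
      using assms 3 s1 by (intro divide_strict_right_mono) auto
    ultimately have "(- b2) / sqrt (V - b2\<^sup>2 * s) < (- b1) / sqrt (V - b1\<^sup>2 * s)" by linarith
    then show ?thesis by (simp only: minus_divide_left[symmetric])
  qed
qed

theorem lemma1:
  fixes \<mu> \<sigma>2 V :: real
  assumes "\<sigma>2 > 0" and "V > 0"
  shows "strict_mono_on {- sqrt (V / \<sigma>2) <..< sqrt (V / \<sigma>2)} (F \<mu> \<sigma>2 V)"
proof (rule strict_mono_onI)
  fix b1 b2 assume b1: "b1 \<in> {- sqrt (V / \<sigma>2) <..< sqrt (V / \<sigma>2)}"
    and b2: "b2 \<in> {- sqrt (V / \<sigma>2) <..< sqrt (V / \<sigma>2)}" and lt: "b1 < b2"
  have sq: "b\<^sup>2 * \<sigma>2 < V" if "b \<in> {- sqrt (V / \<sigma>2) <..< sqrt (V / \<sigma>2)}" for b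
  proof -
    have "\<bar>b\<bar> < sqrt (V / \<sigma>2)" using that by auto
    then have "\<bar>b\<bar>\<^sup>2 < (sqrt (V / \<sigma>2))\<^sup>2"
      using power_strict_mono[of "\<bar>b\<bar>" "sqrt (V / \<sigma>2)" 2] by simp
    then have "b\<^sup>2 < V / \<sigma>2" using assms by simp
    then show ?thesis using assms by (simp add: pos_less_divide_eq)
  qed
  have pd: "pdens \<mu> \<sigma>2 u = normal_density \<mu> (sqrt \<sigma>2) u" for u
    using assms unfolding pdens_def normal_density_def by simp
  define G where "G b u = indicator {\<mu>..} u * ((1 - Phi (- b * (u - \<mu>) / sqrt (V - b\<^sup>2 * \<sigma>2))) * pdens \<mu> \<sigma>2 u)" for b u
  have Feq: "F \<mu> \<sigma>2 V b = integral\<^sup>L lborel (G b)" if "b \<in> {- sqrt (V / \<sigma>2) <..< sqrt (V / \<sigma>2)}" for b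
    using that unfolding F_def G_def set_lebesgue_integral_def by simp
  have Gi: "integrable lborel (G b)" for b
  proof (rule Bochner_Integration.integrable_bound[of _ "normal_density \<mu> (sqrt \<sigma>2)"])
    show "integrable lborel (normal_density \<mu> (sqrt \<sigma>2))"
      by (rule integrable_normal_density) (use assms in simp)
    show "G b \<in> borel_measurable lborel" unfolding G_def pd by measurable
    show "AE x in lborel. norm (G b x) \<le> norm (normal_density \<mu> (sqrt \<sigma>2) x)"
      using Phi_nonneg Phi_le1 unfolding G_def pd
      by (auto simp: indicator_def abs_mult intro!: mult_left_le_one_le)
  qed
  have key: "- b2 * (u - \<mu>) / sqrt (V - b2\<^sup>2 * \<sigma>2) \<le> - b1 * (u - \<mu>) / sqrt (V - b1\<^sup>2 * \<sigma>2)
      \<and> (u > \<mu> \<longrightarrow> - b2 * (u - \<mu>) / sqrt (V - b2\<^sup>2 * \<sigma>2) < - b1 * (u - \<mu>) / sqrt (V - b1\<^sup>2 * \<sigma>2))"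
    if "u \<ge> \<mu>" for u
  proof -
    have h: "b1 / sqrt (V - b1\<^sup>2 * \<sigma>2) < b2 / sqrt (V - b2\<^sup>2 * \<sigma>2)"
      using h_mono[OF lt sq[OF b1] sq[OF b2] assms(1)] .
    have e: "- b * (u - \<mu>) / sqrt (V - b\<^sup>2 * \<sigma>2) = - ((u - \<mu>) * (b / sqrt (V - b\<^sup>2 * \<sigma>2)))" for b
      by (metis minus_divide_left mult.commute mult_minus_left times_divide_eq_right)
    have m1: "(u - \<mu>) * (b1 / sqrt (V - b1\<^sup>2 * \<sigma>2)) \<le> (u - \<mu>) * (b2 / sqrt (V - b2\<^sup>2 * \<sigma>2))"
      using h that by (intro mult_left_mono) auto
    have m2: "(u - \<mu>) * (b1 / sqrt (V - b1\<^sup>2 * \<sigma>2)) < (u - \<mu>) * (b2 / sqrt (V - b2\<^sup>2 * \<sigma>2))"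
      if "u > \<mu>" using h that by (intro mult_strict_left_mono) auto
    show ?thesis unfolding e using m1 m2 by linarith
  qed
  have "integral\<^sup>L lborel (G b1) < integral\<^sup>L lborel (G b2)"
  proof (rule int_strict[OF Gi Gi, of _ _ \<mu> "\<mu> + 1"])
    fix x
    let ?c1 = "- b1 * (x - \<mu>) / sqrt (V - b1\<^sup>2 * \<sigma>2)"
    let ?c2 = "- b2 * (x - \<mu>) / sqrt (V - b2\<^sup>2 * \<sigma>2)"
    have pp: "0 < pdens \<mu> \<sigma>2 x" unfolding pd using assms by (simp add: normal_density_pos)
    show "G b1 x \<le> G b2 x"
    proof (cases "\<mu> \<le> x")
      case True
      have "Phi ?c2 \<le> Phi ?c1" using key[OF True] Phi_mono by (simp add: monoD)
      then have "(1 - Phi ?c1) * pdens \<mu> \<sigma>2 x \<le> (1 - Phi ?c2) * pdens \<mu> \<sigma>2 x"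
        using pp by (intro mult_right_mono) auto
      then show ?thesis using True unfolding G_def by simp
    next
      case False
      then show ?thesis unfolding G_def by simp
    qed
  next
    fix x assume x: "\<mu> < x" "x < \<mu> + 1"
    let ?c1 = "- b1 * (x - \<mu>) / sqrt (V - b1\<^sup>2 * \<sigma>2)"
    let ?c2 = "- b2 * (x - \<mu>) / sqrt (V - b2\<^sup>2 * \<sigma>2)"
    have pp: "0 < pdens \<mu> \<sigma>2 x" unfolding pd using assms by (simp add: normal_density_pos)
    have "Phi ?c2 < Phi ?c1" using key[of x] x Phi_strict by simp
    then have "(1 - Phi ?c1) * pdens \<mu> \<sigma>2 x < (1 - Phi ?c2) * pdens \<mu> \<sigma>2 x"
      using pp by (intro mult_strict_right_mono) auto
    then show "G b1 x < G b2 x" using x unfolding G_def by simp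
  qed simp
  then show "F \<mu> \<sigma>2 V b1 < F \<mu> \<sigma>2 V b2" using Feq[OF b1] Feq[OF b2] by simp
qed

end
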